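(* For integers $n\ge 0$ and $p$ with $p\le n+1$, $$\sum_{j,k}\binom{n}{k}\genfrac{\{}{\}}{0pt}{}{k}{j}\genfrac{[}{]}{0pt}{}{j+1}{p}(-1)^j=\begin{cases}0,&(n+1>p)\\(-1)^n,&(n+1=p).\end{cases}$$
   Context: Here $\genfrac{[}{]}{0pt}{}{n}{k}$ denotes the unsigned (absolute) Stirling number of the first kind and $\genfrac{\{}{\}}{0pt}{}{n}{k}$ the ordinary Stirling number of the second kind (Knuth's notation), with $\genfrac{[}{]}{0pt}{}{0}{0}=\genfrac{\{}{\}}{0pt}{}{0}{0}=1$, $\genfrac{[}{]}{0pt}{}{n}{0}=\genfrac{\{}{\}}{0pt}{}{n}{0}=0$ for $n>0$, and $\genfrac{[}{]}{0pt}{}{n}{k}=\genfrac{\{}{\}}{0pt}{}{n}{k}=0$ for $0\le n<k$. The double sum is over all integers $j,k$ with $0\le j\le k\le n$. *)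

theory Defs
  imports "HOL-Combinatorics.Stirling"
begin

definition stirling1_int :: "nat \<Rightarrow> int \<Rightarrow> int" where
  "stirling1_int n k = (if k < 0 then 0 else int (stirling n (nat k)))"

end

theory Submission imports Defs "HOL-Computational_Algebra.Polynomial" begin

lemma stir2_poch:
  fixes y :: "'a::comm_ring_1"
  shows "(\<Sum>j\<le>k. of_nat (Stirling k j) * ((-1)^j * pochhammer y j)) = (-y)^k"
proof (induction k)
  case 0
  then show ?case by simp
next
  case (Suc k)
  define g where "g j = (-1)^j * pochhammer y j" for j
  have key: "(-y) * g j = g (Suc j) + of_nat j * g j" for j
    unfolding g_def pochhammer_Suc by (simp add: algebra_simps)
  have IH: "(\<Sum>j\<le>k. of_nat (Stirling k j) * g j) = (-y)^k" using Suc g_def by simp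
  have "(-y)^Suc k = (\<Sum>j\<le>k. of_nat (Stirling k j) * ((-y) * g j))"
    by (simp only: power_Suc flip: IH) (simp add: sum_distrib_left mult_ac)
  also have "\<dots> = (\<Sum>j\<le>k. of_nat (Stirling k j) * g (Suc j)) + (\<Sum>j\<le>k. of_nat (Stirling k j) * of_nat j * g j)"
    unfolding key by (simp add: distrib_left sum.distrib mult.assoc)
  also have "(\<Sum>j\<le>k. of_nat (Stirling k j) * of_nat j * g j) = (\<Sum>j\<le>Suc k. of_nat (Stirling k j) * of_nat j * g j)"
    by simp
  also have "\<dots> = (\<Sum>j\<le>k. of_nat (Stirling k (Suc j)) * of_nat (Suc j) * g (Suc j))"
    by (subst sum.atMost_Suc_shift) simp
  also have "(\<Sum>j\<le>k. of_nat (Stirling k j) * g (Suc j)) + \<dots> = (\<Sum>j\<le>k. of_nat (Stirling (Suc k) (Suc j)) * g (Suc j))"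
    by (simp add: sum.distrib algebra_simps)
  also have "\<dots> = (\<Sum>j\<le>Suc k. of_nat (Stirling (Suc k) j) * g j)"
    by (simp only: sum.atMost_Suc_shift) simp
  finally show ?case by (simp add: g_def)
qed

lemma main_ident:
  fixes x :: "'a::comm_ring_1"
  shows "(\<Sum>k\<le>n. \<Sum>j\<le>k. of_nat (n choose k) * of_nat (Stirling k j) * (-1)^j * pochhammer x (Suc j)) = (-1)^n * x^Suc n"
proof -
  have step: "(\<Sum>j\<le>k. of_nat (n choose k) * of_nat (Stirling k j) * (-1)^j * pochhammer x (Suc j))
     = x * of_nat (n choose k) * (\<Sum>j\<le>k. of_nat (Stirling k j) * ((-1)^j * pochhammer (x+1) j))" for k
    unfolding sum_distrib_left
    by (rule sum.cong[OF refl]) (simp only: pochhammer_rec[of x] ring_distribs(1)[symmetric] mult.assoc mult.left_commute)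
  have "(\<Sum>k\<le>n. \<Sum>j\<le>k. of_nat (n choose k) * of_nat (Stirling k j) * (-1)^j * pochhammer x (Suc j))
     = (\<Sum>k\<le>n. x * of_nat (n choose k) * (-(x+1))^k)"
    by (simp only: step stir2_poch)
  also have "\<dots> = x * (\<Sum>k\<le>n. of_nat (n choose k) * (-(x+1))^k * 1^(n-k))"
    by (simp only: sum_distrib_left power_one mult_1_right mult.assoc)
  also have "\<dots> = x * ((-(x+1)) + 1)^n" by (simp only: binomial_ring[of "-(x+1)" 1 n])
  also have "\<dots> = x * (-x)^n" by simp
  also have "\<dots> = (-1)^n * x^Suc n" by (subst power_minus) (simp add: mult_ac)
  finally show ?thesis .
qed

lemma xpow: "[:0,1::'a::comm_ring_1:]^i = monom 1 i" by (simp add: monom_altdef)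

lemma coeff_neg1: "coeff ((-1)^j * (p::int poly)) q = (-1)^j * coeff p q"
  by (cases "even j") auto

lemma coeff_poch: "coeff (pochhammer [:0,1::int:] m) q = int (stirling m q)"
proof -
  have "pochhammer [:0,1::int:] m = (\<Sum>i\<le>m. of_nat (stirling m i) * [:0,1:]^i)"
    by (simp add: stirling_pochhammer)
  then have "coeff (pochhammer [:0,1::int:] m) q = (\<Sum>i\<le>m. int (stirling m i) * (if i = q then 1 else 0))"
    by (simp add: coeff_sum of_nat_poly xpow coeff_monom)
  also have "\<dots> = int (stirling m q)" 
  proof -
    have "(\<Sum>i\<le>m. int (stirling m i) * (if i = q then 1 else 0)) = (\<Sum>i\<le>m. if i = q then int (stirling m i) else 0)"
      by (rule sum.cong) auto
    also have "\<dots> = int (stirling m q)" by (cases "q \<le> m") (simp_all add: sum.delta)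
    finally show ?thesis .
  qed
  finally show ?thesis .
qed

theorem mainTheorem4:
  fixes n :: nat and p :: int
  assumes "p \<le> int n + 1"
  shows "(\<Sum>k\<le>n. \<Sum>j\<le>k. int (n choose k) * int (Stirling k j) * stirling1_int (j + 1) p * (-1) ^ j)
         = (if int n + 1 > p then 0 else (-1) ^ n)"
proof (cases "p < 0")
  case True
  then show ?thesis by (simp add: stirling1_int_def)
next
  case False
  define q where "q = nat p"
  have pq: "p = int q" using False q_def by simp
  let ?X = "[:0,1::int:]"
  have "(\<Sum>k\<le>n. \<Sum>j\<le>k. int (n choose k) * int (Stirling k j) * stirling1_int (j + 1) p * (-1) ^ j)
      = coeff (\<Sum>k\<le>n. \<Sum>j\<le>k. of_nat (n choose k) * of_nat (Stirling k j) * (-1)^j * pochhammer ?X (Suc j)) q"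
    by (simp add: coeff_sum pq stirling1_int_def coeff_poch of_nat_poly coeff_neg1 mult.assoc) (simp add: mult_ac)
  also have "\<dots> = coeff ((-1)^n * ?X^Suc n) q" by (simp only: main_ident)
  also have "\<dots> = (if q = Suc n then (-1)^n else 0)"
    by (simp only: coeff_neg1 xpow coeff_monom) simp
  finally show ?thesis using assms pq by auto
qed

end
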